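(* Let $(R,m)$ and $(T,\eta)$ be Noetherian local rings and let $R\to T$ be a finite local ring homomorphism such that $T$ is a free $R$-module and $T/mT$ is Gorenstein. Let $J\subseteq T$ be an ideal and let $h:R\to T/J$ be the composite of $R\to T$ with the projection $T\to T/J$, so that $T/J$ carries the $R$-module structure induced from $T$. Then $h$ splits, i.e. there exists an $R$-linear map $\rho:T/J\to R$ with $\rho(1)=1$, if and only if $\mathrm{Ann}_TJ\not\subseteq mT$.
   Context: All rings are commutative with identity. *)

theory Defs
  imports "HOL-Algebra.Algebra"
begin

definition local_ring :: "('a, 'm) ring_scheme \<Rightarrow> 'a set \<Rightarrow> bool" where
  "local_ring A m \<longleftrightarrow> cring A \<and> maximalideal m A \<and> (\<forall>I. maximalideal I A \<longrightarrow> I = m)"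

definition artinian_ring :: "('a, 'm) ring_scheme \<Rightarrow> bool" where
  "artinian_ring A \<longleftrightarrow> ring A \<and>
     (\<forall>I :: nat \<Rightarrow> 'a set. (\<forall>n. ideal (I n) A \<and> I (Suc n) \<subseteq> I n) \<longrightarrow>
        (\<exists>N. \<forall>n\<ge>N. I n = I N))"

definition socle :: "('a, 'm) ring_scheme \<Rightarrow> 'a set \<Rightarrow> 'a set" where
  "socle A n = {x \<in> carrier A. \<forall>y\<in>n. x \<otimes>\<^bsub>A\<^esub> y = \<zero>\<^bsub>A\<^esub>}"

text \<open>Artinian local Gorenstein ring: Artinian local ring (A,n) whose socle is a
  one-dimensional vector space over the residue field A/n, i.e. it is spanned by
  a single nonzero element.\<close>
definition gorenstein_artinian :: "('a, 'm) ring_scheme \<Rightarrow> bool" where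
  "gorenstein_artinian A \<longleftrightarrow> artinian_ring A \<and>
     (\<exists>n. local_ring A n \<and>
        (\<exists>s\<in>socle A n. s \<noteq> \<zero>\<^bsub>A\<^esub> \<and> socle A n = {a \<otimes>\<^bsub>A\<^esub> s | a. a \<in> carrier A}))"

definition finite_free_via :: "('a, 'm) ring_scheme \<Rightarrow> ('b, 'n) ring_scheme \<Rightarrow> ('a \<Rightarrow> 'b) \<Rightarrow> bool" where
  "finite_free_via R T \<phi> \<longleftrightarrow>
     (\<exists>B. finite B \<and> B \<subseteq> carrier T \<and>
        (\<forall>t\<in>carrier T. \<exists>!c. c \<in> B \<rightarrow>\<^sub>E carrier R \<and>
             t = (\<Oplus>\<^bsub>T\<^esub> b\<in>B. \<phi> (c b) \<otimes>\<^bsub>T\<^esub> b)))"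

definition annihilator :: "('b, 'n) ring_scheme \<Rightarrow> 'b set \<Rightarrow> 'b set" where
  "annihilator T J = {t \<in> carrier T. \<forall>j\<in>J. t \<otimes>\<^bsub>T\<^esub> j = \<zero>\<^bsub>T\<^esub>}"

definition splits :: "('a, 'm) ring_scheme \<Rightarrow> ('c, 'k) ring_scheme \<Rightarrow> ('a \<Rightarrow> 'c) \<Rightarrow> bool" where
  "splits R S h \<longleftrightarrow>
     (\<exists>\<rho>. \<rho> \<in> carrier S \<rightarrow> carrier R \<and>
        (\<forall>x\<in>carrier S. \<forall>y\<in>carrier S. \<rho> (x \<oplus>\<^bsub>S\<^esub> y) = \<rho> x \<oplus>\<^bsub>R\<^esub> \<rho> y) \<and>
        (\<forall>r\<in>carrier R. \<forall>x\<in>carrier S. \<rho> (h r \<otimes>\<^bsub>S\<^esub> x) = r \<otimes>\<^bsub>R\<^esub> \<rho> x) \<and>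
        \<rho> \<one>\<^bsub>S\<^esub> = \<one>\<^bsub>R\<^esub>)"

end

theory Submission
  imports Defs
begin


lemma (in ring) exists_maximal_above:
  assumes I: "ideal I R" and one: "\<one> \<notin> I"
  shows "\<exists>M. maximalideal M R \<and> I \<subseteq> M"
proof -
  define S where "S = {J. ideal J R \<and> I \<subseteq> J \<and> \<one> \<notin> J}"
  have "\<exists>M\<in>S. \<forall>Y\<in>S. M \<subseteq> Y \<longrightarrow> Y = M"
  proof (rule subset_Zorn)
    fix C assume C: "subset.chain S C"
    show "\<exists>U\<in>S. \<forall>Y\<in>C. Y \<subseteq> U"
    proof (cases "C = {}")
      case True then show ?thesis using I one unfolding S_def by auto
    next
      case False
      have ch: "subset.chain {J. ideal J R} C" using C unfolding pred_on.chain_def S_def by auto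
      have "ideal (\<Union>C) R" using chain_Union_is_ideal[OF ch] False by simp
      moreover have "I \<subseteq> \<Union>C" using False C unfolding pred_on.chain_def S_def by blast
      moreover have "\<one> \<notin> \<Union>C" using C unfolding pred_on.chain_def S_def by auto
      ultimately show ?thesis unfolding S_def by auto
    qed
  qed
  then obtain M where M: "M \<in> S" and Mmax: "\<And>Y. Y \<in> S \<Longrightarrow> M \<subseteq> Y \<Longrightarrow> Y = M" by auto
  have "maximalideal M R"
  proof (rule maximalidealI)
    show "ideal M R" using M S_def by auto
    show "carrier R \<noteq> M" using M S_def by auto
    fix J assume J: "ideal J R" "M \<subseteq> J" "J \<subseteq> carrier R"
    show "J = M \<or> J = carrier R"
    proof (cases "\<one> \<in> J")
      case True then show ?thesis using ideal.one_imp_carrier[OF J(1)] by auto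
    next
      case False then have "J \<in> S" using J M S_def by auto
      then show ?thesis using Mmax J by auto
    qed
  qed
  then show ?thesis using M S_def by auto
qed

lemma (in cring) local_ring_unit:
  assumes "local_ring R n" and x: "x \<in> carrier R" and xn: "x \<notin> n"
  shows "x \<in> Units R"
proof (rule ccontr)
  assume nu: "x \<notin> Units R"
  have id: "ideal (PIdl x) R" using cgenideal_ideal[OF x] .
  have "\<one> \<notin> PIdl x"
  proof
    assume "\<one> \<in> PIdl x"
    then obtain y where y: "y \<in> carrier R" "\<one> = y \<otimes> x" unfolding cgenideal_def by auto
    then have "x \<in> Units R" using x m_comm unfolding Units_def by auto
    then show False using nu by simp
  qed
  then obtain M where "maximalideal M R" "PIdl x \<subseteq> M" using exists_maximal_above[OF id] by auto
  then have "M = n" "x \<in> M" using assms(1) cgenideal_self[OF x] unfolding local_ring_def by auto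
  then show False using xn by simp
qed




lemma (in cring) max_one_notin:
  assumes "local_ring R n" shows "\<one> \<notin> n" "ideal n R"
  using assms unfolding local_ring_def
  by (metis maximalideal.I_notcarr ideal.one_imp_carrier maximalideal.axioms(1))+

lemma (in cring) gorenstein_gen:
  assumes art: "artinian_ring R" and loc: "local_ring R n"
    and s: "s \<in> socle R n" "s \<noteq> \<zero>" and soc: "socle R n = {b \<otimes> s | b. b \<in> carrier R}"
    and a: "a \<in> carrier R" "a \<noteq> \<zero>"
  shows "\<exists>u\<in>carrier R. s = u \<otimes> a"
proof -
  have n1: "\<one> \<notin> n" and nI: "ideal n R" using max_one_notin[OF loc] by auto
  have sc: "s \<in> carrier R" using s unfolding socle_def by auto
  have PIa: "ideal (PIdl a) R" using cgenideal_ideal[OF a(1)] .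
  have "\<exists>w. w \<in> PIdl a \<and> w \<noteq> \<zero> \<and> (\<forall>z\<in>carrier R. z \<otimes> w \<noteq> \<zero> \<longrightarrow> w \<in> PIdl (z \<otimes> w))"
  proof (rule ccontr)
    assume "\<not> ?thesis"
    then have H: "\<And>w. w \<in> PIdl a \<Longrightarrow> w \<noteq> \<zero> \<Longrightarrow> \<exists>z. z \<in> carrier R \<and> z \<otimes> w \<noteq> \<zero> \<and> w \<notin> PIdl (z \<otimes> w)"
      by blast
    define f where "f w = (SOME z. z \<in> carrier R \<and> z \<otimes> w \<noteq> \<zero> \<and> w \<notin> PIdl (z \<otimes> w)) \<otimes> w" for w
    define sq where "sq k = (f ^^ k) a" for k
    have fprop: "f w \<in> PIdl a \<and> f w \<noteq> \<zero> \<and> w \<notin> PIdl (f w) \<and> (\<exists>z\<in>carrier R. f w = z \<otimes> w)"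
      if "w \<in> PIdl a" "w \<noteq> \<zero>" for w
    proof -
      have "\<exists>z. z \<in> carrier R \<and> z \<otimes> w \<noteq> \<zero> \<and> w \<notin> PIdl (z \<otimes> w)" using H that by blast
      then have z: "(SOME z. z \<in> carrier R \<and> z \<otimes> w \<noteq> \<zero> \<and> w \<notin> PIdl (z \<otimes> w)) \<in> carrier R \<and>
        (SOME z. z \<in> carrier R \<and> z \<otimes> w \<noteq> \<zero> \<and> w \<notin> PIdl (z \<otimes> w)) \<otimes> w \<noteq> \<zero> \<and>
         w \<notin> PIdl ((SOME z. z \<in> carrier R \<and> z \<otimes> w \<noteq> \<zero> \<and> w \<notin> PIdl (z \<otimes> w)) \<otimes> w)"
        by (rule someI_ex)
      then show ?thesis unfolding f_def using ideal.I_l_closed[OF PIa that(1)] by blast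
    qed
    have inv: "sq k \<in> PIdl a \<and> sq k \<noteq> \<zero>" for k
    proof (induction k)
      case 0 then show ?case using cgenideal_self[OF a(1)] a unfolding sq_def by simp
    next
      case (Suc k) then show ?case using fprop unfolding sq_def by simp
    qed
    have PIcar: "PIdl b \<subseteq> carrier R" if "b \<in> carrier R" for b
      using ideal.Icarr[OF cgenideal_ideal[OF that]] by blast
    have sqc: "sq k \<in> carrier R" for k using inv[of k] PIcar[OF a(1)] by blast
    have "\<forall>k. ideal (PIdl (sq k)) R \<and> PIdl (sq (Suc k)) \<subseteq> PIdl (sq k)"
    proof
      fix k
      obtain z where z: "z \<in> carrier R" "sq (Suc k) = z \<otimes> sq k" using fprop[OF conjunct1[OF inv] conjunct2[OF inv], of k]
        unfolding sq_def by auto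
      have "PIdl (sq (Suc k)) \<subseteq> PIdl (sq k)"
        unfolding cgenideal_def using z sqc[of k] m_assoc by (auto, metis m_closed)
      then show "ideal (PIdl (sq k)) R \<and> PIdl (sq (Suc k)) \<subseteq> PIdl (sq k)"
        using cgenideal_ideal[OF sqc] by auto
    qed
    moreover have "(\<forall>k. ideal (PIdl (sq k)) R \<and> PIdl (sq (Suc k)) \<subseteq> PIdl (sq k)) \<longrightarrow>
       (\<exists>N. \<forall>k\<ge>N. PIdl (sq k) = PIdl (sq N))"
      using art unfolding artinian_ring_def by (rule conjunct2[THEN spec[of _ "\<lambda>k. PIdl (sq k)"]])
    ultimately obtain N where N: "\<forall>k\<ge>N. PIdl (sq k) = PIdl (sq N)" by blast
    have "sq N \<notin> PIdl (sq (Suc N))" using fprop[OF conjunct1[OF inv] conjunct2[OF inv], of N]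
      unfolding sq_def by auto
    moreover have "sq N \<in> PIdl (sq (Suc N))" using N[rule_format, of "Suc N"] cgenideal_self[OF sqc[of N]] by auto
    ultimately show False by simp
  qed
  then obtain w where w: "w \<in> PIdl a" "w \<noteq> \<zero>" and wmin: "\<And>z. z \<in> carrier R \<Longrightarrow> z \<otimes> w \<noteq> \<zero> \<Longrightarrow> w \<in> PIdl (z \<otimes> w)"
    by blast
  obtain v where v: "v \<in> carrier R" "w = v \<otimes> a" using w(1) unfolding cgenideal_def by auto
  have wc: "w \<in> carrier R" using v a by simp
  have "w \<in> socle R n"
    unfolding socle_def
  proof (safe)
    show "w \<in> carrier R" by fact
    fix y assume y: "y \<in> n"
    have yc: "y \<in> carrier R" using ideal.Icarr[OF nI y] .
    show "w \<otimes> y = \<zero>"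
    proof (rule ccontr)
      assume ne: "w \<otimes> y \<noteq> \<zero>"
      then have "y \<otimes> w \<noteq> \<zero>" using m_comm yc wc by simp
      then have "w \<in> PIdl (y \<otimes> w)" using wmin yc by simp
      then obtain z where z: "z \<in> carrier R" "w = z \<otimes> (y \<otimes> w)" unfolding cgenideal_def by auto
      have zy: "z \<otimes> y \<in> n" using ideal.I_l_closed[OF nI y z(1)] .
      have "\<one> \<ominus> z \<otimes> y \<notin> n"
      proof
        assume "\<one> \<ominus> z \<otimes> y \<in> n"
        then have "(\<one> \<ominus> z \<otimes> y) \<oplus> z \<otimes> y \<in> n" using zy nI by (metis additive_subgroup.a_closed ideal.axioms(1))
        moreover have "(\<one> \<ominus> z \<otimes> y) \<oplus> z \<otimes> y = \<one>" using z yc by algebra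
        ultimately show False using n1 by simp
      qed
      then have u: "\<one> \<ominus> z \<otimes> y \<in> Units R" using local_ring_unit[OF loc] z yc by simp
      have "(\<one> \<ominus> z \<otimes> y) \<otimes> w = w \<ominus> z \<otimes> (y \<otimes> w)" using z yc wc by algebra
      also have "\<dots> = \<zero>" using z(2)[symmetric] wc by simp
      finally have "(\<one> \<ominus> z \<otimes> y) \<otimes> w = \<zero>" .
      then have "inv (\<one> \<ominus> z \<otimes> y) \<otimes> ((\<one> \<ominus> z \<otimes> y) \<otimes> w) = \<zero>" using u by simp
      then have "w = \<zero>" using u wc by (simp add: m_assoc[symmetric] Units_closed)
      then show False using w by simp
    qed
  qed
  then obtain c where c: "c \<in> carrier R" "w = c \<otimes> s" using soc by auto
  have "c \<notin> n"
  proof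
    assume "c \<in> n"
    then have "s \<otimes> c = \<zero>" using s(1) unfolding socle_def by auto
    then show False using c w(2) m_comm sc by simp
  qed
  then have cu: "c \<in> Units R" using local_ring_unit[OF loc] c by simp
  have "s = inv c \<otimes> w" using c cu sc by (simp add: m_assoc[symmetric] Units_closed)
  also have "\<dots> = (inv c \<otimes> v) \<otimes> a" using v cu a by (simp add: m_assoc Units_closed)
  finally show ?thesis using cu v by (intro bexI[of _ "inv c \<otimes> v"]) (auto intro: Units_inv_closed)
qed




lemma (in cring) finsum_split_pt:
  assumes "finite I" "i0 \<in> I" "f \<in> I \<rightarrow> carrier R"
  shows "(\<Oplus>i\<in>I. f i) = f i0 \<oplus> (\<Oplus>i\<in>I - {i0}. f i)"
proof -
  have "I = insert i0 (I - {i0})" using assms by auto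
  then have "(\<Oplus>i\<in>I. f i) = (\<Oplus>i\<in>insert i0 (I - {i0}). f i)" by simp
  also have "\<dots> = f i0 \<oplus> (\<Oplus>i\<in>I - {i0}. f i)"
    using assms by (intro finsum_insert) auto
  finally show ?thesis .
qed

lemma (in cring) aux1:
  "p \<in> carrier R \<Longrightarrow> q \<in> carrier R \<Longrightarrow> g \<in> carrier R \<Longrightarrow> S \<in> carrier R \<Longrightarrow>
   (p \<oplus> q) \<otimes> g \<oplus> S = p \<otimes> g \<oplus> S \<oplus> q \<otimes> g"
  by algebra

lemma (in cring) aux2:
  assumes "S \<in> carrier R" "ai \<in> carrier R" "a \<in> carrier R" "ai \<otimes> a = \<one>"
  shows "\<ominus> (S \<otimes> ai) \<otimes> a \<oplus> S = \<zero>"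
proof -
  have "\<ominus> (S \<otimes> ai) \<otimes> a = \<ominus> (S \<otimes> (ai \<otimes> a))" using assms by (simp add: l_minus m_assoc)
  then show ?thesis using assms by (simp add: l_neg)
qed

lemma (in cring) aux3:
  assumes "S \<in> carrier R" "ai \<in> carrier R" "a \<in> carrier R" "a \<otimes> ai = \<one>" "x0 \<in> carrier R"
    "x0 \<otimes> a \<oplus> S = \<zero>"
  shows "x0 = \<ominus> (S \<otimes> ai)"
proof -
  have "x0 \<otimes> a = \<ominus> S" using assms by (intro minus_equality[symmetric]) auto
  then have "x0 \<otimes> a \<otimes> ai = \<ominus> S \<otimes> ai" by simp
  then show ?thesis using assms by (simp add: m_assoc l_minus)
qed

lemma (in cring) mat_solve:
  assumes mI: "ideal m R" and m1: "\<one> \<notin> m" and U: "\<And>x. x \<in> carrier R \<Longrightarrow> x \<notin> m \<Longrightarrow> x \<in> Units R"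
  shows "finite I \<Longrightarrow> finite J \<Longrightarrow> card I = card J \<Longrightarrow> (\<And>i j. i\<in>I \<Longrightarrow> j\<in>J \<Longrightarrow> G i j \<in> carrier R) \<Longrightarrow>
   (\<And>x. x \<in> I \<rightarrow> carrier R \<Longrightarrow> (\<And>j. j\<in>J \<Longrightarrow> (\<Oplus>i\<in>I. x i \<otimes> G i j) \<in> m) \<Longrightarrow> (\<forall>i\<in>I. x i \<in> m)) \<Longrightarrow>
   (\<forall>y \<in> J \<rightarrow> carrier R. \<exists>x \<in> I \<rightarrow> carrier R. \<forall>j\<in>J. (\<Oplus>i\<in>I. x i \<otimes> G i j) = y j) \<and>
   (\<forall>x \<in> I \<rightarrow> carrier R. (\<forall>j\<in>J. (\<Oplus>i\<in>I. x i \<otimes> G i j) = \<zero>) \<longrightarrow> (\<forall>i\<in>I. x i = \<zero>))"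
proof (induction "card I" arbitrary: I J G)
  case 0
  then have "I = {}" "J = {}" by auto
  then show ?case by auto
next
  case (Suc k)
  have mc: "m \<subseteq> carrier R" using ideal.Icarr[OF mI] by blast
  obtain i0 where i0: "i0 \<in> I" using Suc(2) by (metis card.empty ex_in_conv nat.distinct(1))
  define I' where "I' = I - {i0}"
  have Gc: "\<And>i j. i\<in>I \<Longrightarrow> j\<in>J \<Longrightarrow> G i j \<in> carrier R" by fact
  have split: "(\<Oplus>i\<in>I. x i \<otimes> G i j) = x i0 \<otimes> G i0 j \<oplus> (\<Oplus>i\<in>I'. x i \<otimes> G i j)"
    if "x \<in> I \<rightarrow> carrier R" "j \<in> J" for x j
    unfolding I'_def using that Gc by (intro finsum_split_pt[OF Suc(3) i0]) auto
  have "\<exists>j0\<in>J. G i0 j0 \<notin> m"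
  proof (rule ccontr)
    assume "\<not> ?thesis"
    then have all: "\<And>j. j \<in> J \<Longrightarrow> G i0 j \<in> m" by blast
    define x where "x = (\<lambda>i. if i = i0 then \<one> else \<zero>)"
    have xc: "x \<in> I \<rightarrow> carrier R" unfolding x_def by auto
    have "(\<Oplus>i\<in>I. x i \<otimes> G i j) \<in> m" if j: "j \<in> J" for j
    proof -
      have "(\<Oplus>i\<in>I'. x i \<otimes> G i j) = (\<Oplus>i\<in>I'. \<zero>)"
        unfolding I'_def x_def using Gc j by (intro finsum_cong') auto
      then have "(\<Oplus>i\<in>I. x i \<otimes> G i j) = G i0 j"
        using split[OF xc j] Gc[OF i0 j] unfolding x_def by simp
      then show ?thesis using all j by simp
    qed
    then have "x i0 \<in> m" using Suc(7)[OF xc] i0 by blast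
    then show False using m1 unfolding x_def by simp
  qed
  then obtain j0 where j0: "j0 \<in> J" "G i0 j0 \<notin> m" by blast
  define a where "a = G i0 j0"
  have au: "a \<in> Units R" using U Gc[OF i0 j0(1)] j0(2) unfolding a_def by simp
  have ac: "a \<in> carrier R" using au by (simp add: Units_closed)
  define ai where "ai = inv a"
  have aic: "ai \<in> carrier R" and aia: "ai \<otimes> a = \<one>" and aai: "a \<otimes> ai = \<one>"
    using au unfolding ai_def by auto
  define J' where "J' = J - {j0}"
  define d where "d j = \<ominus> (ai \<otimes> G i0 j)" for j
  define H where "H i j = G i j \<oplus> G i j0 \<otimes> d j" for i j
  have dc: "j \<in> J \<Longrightarrow> d j \<in> carrier R" for j unfolding d_def using aic Gc i0 by simp
  have Hc: "i\<in>I' \<Longrightarrow> j\<in>J' \<Longrightarrow> H i j \<in> carrier R" for i j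
    unfolding H_def I'_def J'_def using Gc dc j0 by auto
  have finI': "finite I'" and finJ': "finite J'" using Suc(3,4) unfolding I'_def J'_def by auto
  have cardI': "k = card I'" using Suc(2) Suc(3) i0 unfolding I'_def by simp
  have cardJ': "card I' = card J'" using Suc(2,3,4,5) i0 j0 unfolding I'_def J'_def by simp
  have Hsum: "(\<Oplus>i\<in>I'. x i \<otimes> H i j) = (\<Oplus>i\<in>I'. x i \<otimes> G i j) \<oplus> (\<Oplus>i\<in>I'. x i \<otimes> G i j0) \<otimes> d j"
    if x: "x \<in> I' \<rightarrow> carrier R" and j: "j \<in> J" for x j
  proof -
    have Gc': "\<And>i. i \<in> I' \<Longrightarrow> G i j \<in> carrier R" "\<And>i. i \<in> I' \<Longrightarrow> G i j0 \<in> carrier R"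
      using Gc j j0 unfolding I'_def by auto
    have "(\<Oplus>i\<in>I'. x i \<otimes> H i j) = (\<Oplus>i\<in>I'. x i \<otimes> G i j \<oplus> (x i \<otimes> G i j0) \<otimes> d j)"
      using x Gc' dc[OF j] unfolding H_def
      by (intro finsum_cong') (auto simp: Pi_iff r_distr m_assoc)
    also have "\<dots> = (\<Oplus>i\<in>I'. x i \<otimes> G i j) \<oplus> (\<Oplus>i\<in>I'. (x i \<otimes> G i j0) \<otimes> d j)"
      using x Gc' dc[OF j] by (intro finsum_addf) (auto simp: Pi_iff)
    also have "(\<Oplus>i\<in>I'. (x i \<otimes> G i j0) \<otimes> d j) = (\<Oplus>i\<in>I'. x i \<otimes> G i j0) \<otimes> d j"
      using x Gc' dc[OF j] finI' by (intro finsum_ldistr[symmetric]) (auto simp: Pi_iff)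
    finally show ?thesis .
  qed
  define ext where "ext c x = (\<lambda>i. if i = i0 then c else x i)" for c and x :: "'c \<Rightarrow> 'a"
  have extc: "c \<in> carrier R \<Longrightarrow> x \<in> I' \<rightarrow> carrier R \<Longrightarrow> ext c x \<in> I \<rightarrow> carrier R" for c x
    unfolding ext_def I'_def by auto
  have extsum: "(\<Oplus>i\<in>I. ext c x i \<otimes> G i j) = c \<otimes> G i0 j \<oplus> (\<Oplus>i\<in>I'. x i \<otimes> G i j)"
    if "c \<in> carrier R" "x \<in> I' \<rightarrow> carrier R" "j \<in> J" for c x j
  proof -
    have "(\<Oplus>i\<in>I'. ext c x i \<otimes> G i j) = (\<Oplus>i\<in>I'. x i \<otimes> G i j)"
      using that Gc unfolding ext_def I'_def by (intro finsum_cong') auto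
    then show ?thesis using split[OF extc[OF that(1,2)] that(3)] unfolding ext_def by simp
  qed
  have sumc: "x \<in> I' \<rightarrow> carrier R \<Longrightarrow> j \<in> J \<Longrightarrow> (\<Oplus>i\<in>I'. x i \<otimes> G i j) \<in> carrier R" for x j
    using Gc unfolding I'_def by (intro finsum_closed) auto
  define e0 where "e0 x = \<ominus> ((\<Oplus>i\<in>I'. x i \<otimes> G i j0) \<otimes> ai)" for x
  have e0c: "x \<in> I' \<rightarrow> carrier R \<Longrightarrow> e0 x \<in> carrier R" for x
    unfolding e0_def using sumc[OF _ j0(1)] aic by simp
  have E1: "(\<Oplus>i\<in>I. ext (e0 x) x i \<otimes> G i j0) = \<zero>" if x: "x \<in> I' \<rightarrow> carrier R" for x
  proof -
    have "(\<Oplus>i\<in>I. ext (e0 x) x i \<otimes> G i j0) = e0 x \<otimes> a \<oplus> (\<Oplus>i\<in>I'. x i \<otimes> G i j0)"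
      using extsum[OF e0c[OF x] x j0(1)] unfolding a_def by simp
    also have "\<dots> = \<zero>" using sumc[OF x j0(1)] aic ac aia unfolding e0_def
      by (simp add: aux2)
    finally show ?thesis .
  qed
  have E2: "(\<Oplus>i\<in>I. ext (e0 x) x i \<otimes> G i j) = (\<Oplus>i\<in>I'. x i \<otimes> H i j)"
    if x: "x \<in> I' \<rightarrow> carrier R" and j: "j \<in> J" for x j
  proof -
    have gc: "G i0 j \<in> carrier R" using Gc i0 j by simp
    have "e0 x \<otimes> G i0 j = (\<Oplus>i\<in>I'. x i \<otimes> G i j0) \<otimes> d j"
      unfolding e0_def d_def using sumc[OF x j0(1)] aic gc by (simp add: l_minus r_minus m_assoc)
    then show ?thesis using extsum[OF e0c[OF x] x j] Hsum[OF x j] sumc[OF x j] sumc[OF x j0(1)] dc[OF j]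
      by (simp add: a_comm)
  qed
  have NH: "\<forall>i\<in>I'. x i \<in> m"
    if x: "x \<in> I' \<rightarrow> carrier R" and hx: "\<And>j. j\<in>J' \<Longrightarrow> (\<Oplus>i\<in>I'. x i \<otimes> H i j) \<in> m" for x
  proof -
    have "(\<Oplus>i\<in>I. ext (e0 x) x i \<otimes> G i j) \<in> m" if j: "j \<in> J" for j
    proof (cases "j = j0")
      case True then show ?thesis using E1[OF x] additive_subgroup.zero_closed[OF ideal.axioms(1)[OF mI]] by simp
    next
      case False then show ?thesis using E2[OF x j] hx j unfolding J'_def by simp
    qed
    then have "\<forall>i\<in>I. ext (e0 x) x i \<in> m" using Suc(7)[OF extc[OF e0c[OF x] x]] by blast
    then show ?thesis unfolding ext_def I'_def by (metis DiffE singletonI)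
  qed
  have IH: "(\<forall>y \<in> J' \<rightarrow> carrier R. \<exists>x \<in> I' \<rightarrow> carrier R. \<forall>j\<in>J'. (\<Oplus>i\<in>I'. x i \<otimes> H i j) = y j) \<and>
   (\<forall>x \<in> I' \<rightarrow> carrier R. (\<forall>j\<in>J'. (\<Oplus>i\<in>I'. x i \<otimes> H i j) = \<zero>) \<longrightarrow> (\<forall>i\<in>I'. x i = \<zero>))"
    using Suc(1)[of I' J' H, OF cardI' finI' finJ' cardJ' Hc NH] by blast
  show ?case
  proof (intro conjI ballI impI)
    fix y assume y: "y \<in> J \<rightarrow> carrier R"
    define y' where "y' j = y j \<oplus> y j0 \<otimes> d j" for j
    have y'c: "y' \<in> J' \<rightarrow> carrier R" using y dc j0 unfolding y'_def J'_def by auto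
    then obtain x' where x': "x' \<in> I' \<rightarrow> carrier R" "\<And>j. j\<in>J' \<Longrightarrow> (\<Oplus>i\<in>I'. x' i \<otimes> H i j) = y' j"
      using IH by blast
    define c where "c = e0 x' \<oplus> y j0 \<otimes> ai"
    have cc: "c \<in> carrier R" unfolding c_def using e0c[OF x'(1)] y j0 aic by auto
    have key: "(\<Oplus>i\<in>I. ext c x' i \<otimes> G i j) = (\<Oplus>i\<in>I. ext (e0 x') x' i \<otimes> G i j) \<oplus> y j0 \<otimes> ai \<otimes> G i0 j"
      if j: "j \<in> J" for j
    proof -
      have gc: "G i0 j \<in> carrier R" using Gc i0 j by simp
      show ?thesis using extsum[OF cc x'(1) j] extsum[OF e0c[OF x'(1)] x'(1) j] sumc[OF x'(1) j] gc
          e0c[OF x'(1)] funcset_mem[OF y j0(1)] aic unfolding c_def by (simp add: aux1)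
    qed
    show "\<exists>x\<in>I \<rightarrow> carrier R. \<forall>j\<in>J. (\<Oplus>i\<in>I. x i \<otimes> G i j) = y j"
    proof (intro bexI[of _ "ext c x'"] ballI)
      show "ext c x' \<in> I \<rightarrow> carrier R" using extc[OF cc x'(1)] .
      fix j assume j: "j \<in> J"
      have yc: "y j \<in> carrier R" "y j0 \<in> carrier R" using y j j0 by auto
      have gc: "G i0 j \<in> carrier R" using Gc i0 j by simp
      show "(\<Oplus>i\<in>I. ext c x' i \<otimes> G i j) = y j"
      proof (cases "j = j0")
        case True
        have "y j0 \<otimes> ai \<otimes> a = y j0" using yc aic ac aia by (simp add: m_assoc)
        then show ?thesis using key[OF j] E1[OF x'(1)] True yc aic unfolding a_def by simp
      next
        case False
        then have jJ': "j \<in> J'" unfolding J'_def using j by simp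
        have "(\<Oplus>i\<in>I. ext c x' i \<otimes> G i j) = y' j \<oplus> y j0 \<otimes> ai \<otimes> G i0 j"
          using key[OF j] E2[OF x'(1) j] x'(2)[OF jJ'] by simp
        also have "\<dots> = y j" unfolding y'_def d_def using yc gc aic by algebra
        finally show ?thesis .
      qed
    qed
  next
    fix x assume x: "x \<in> I \<rightarrow> carrier R" and hx: "\<forall>j\<in>J. (\<Oplus>i\<in>I. x i \<otimes> G i j) = \<zero>"
    have x': "x \<in> I' \<rightarrow> carrier R" using x unfolding I'_def by auto
    have xi0: "x i0 \<in> carrier R" using x i0 by auto
    have "x i0 \<otimes> a \<oplus> (\<Oplus>i\<in>I'. x i \<otimes> G i j0) = \<zero>"
      using hx j0 split[OF x j0(1)] unfolding a_def by simp
    then have xe: "x i0 = e0 x"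
      using sumc[OF x' j0(1)] xi0 ac aic aai unfolding e0_def
      by (simp add: aux3)
    have xext: "ext (e0 x) x = x" unfolding ext_def using xe by auto
    have "\<forall>j\<in>J'. (\<Oplus>i\<in>I'. x i \<otimes> H i j) = \<zero>"
      using E2[OF x'] hx xext unfolding J'_def by auto
    then have z': "\<forall>i\<in>I'. x i = \<zero>" using IH x' by blast
    have "(\<Oplus>i\<in>I'. x i \<otimes> G i j0) = (\<Oplus>i\<in>I'. \<zero>)"
      using z' Gc j0 unfolding I'_def by (intro finsum_cong') auto
    then have "e0 x = \<zero>" unfolding e0_def using aic by simp
    fix i assume i: "i \<in> I"
    show "x i = \<zero>" using z' xe i \<open>e0 x = \<zero>\<close> unfolding I'_def by auto
  qed
qed




locale frame = ring_hom_cring R T \<phi> for R (structure) and T (structure) and \<phi> +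
  fixes B
  assumes finB: "finite B" and BT: "B \<subseteq> carrier T"
    and uniq: "\<And>t. t\<in>carrier T \<Longrightarrow> \<exists>!c. c \<in> B \<rightarrow>\<^sub>E carrier R \<and> t = (\<Oplus>\<^bsub>T\<^esub> b\<in>B. \<phi> (c b) \<otimes>\<^bsub>T\<^esub> b)"
begin

definition lc where "lc c = (\<Oplus>\<^bsub>T\<^esub> b\<in>B. \<phi> (c b) \<otimes>\<^bsub>T\<^esub> b)"
definition crd where "crd t = (THE c. c \<in> B \<rightarrow>\<^sub>E carrier R \<and> t = lc c)"

lemma bT: "b \<in> B \<Longrightarrow> b \<in> carrier T" using BT by auto

lemma lc_closed: assumes c: "c \<in> B \<rightarrow> carrier R" shows "lc c \<in> carrier T"
  unfolding lc_def using bT c by (intro S.finsum_closed) (auto simp: Pi_iff intro!: S.m_closed)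

lemma crd: assumes "t \<in> carrier T" shows "crd t \<in> B \<rightarrow>\<^sub>E carrier R" "t = lc (crd t)"
proof -
  have "\<exists>!c. c \<in> B \<rightarrow>\<^sub>E carrier R \<and> t = lc c" using uniq[OF assms] unfolding lc_def .
  then have "crd t \<in> B \<rightarrow>\<^sub>E carrier R \<and> t = lc (crd t)" unfolding crd_def by (rule theI')
  then show "crd t \<in> B \<rightarrow>\<^sub>E carrier R" "t = lc (crd t)" by auto
qed

lemma crd_c: "t \<in> carrier T \<Longrightarrow> b \<in> B \<Longrightarrow> crd t b \<in> carrier R"
  using crd(1) by auto

lemma crd_lc: assumes c: "c \<in> B \<rightarrow> carrier R" and b: "b \<in> B" shows "crd (lc c) b = c b"
proof -
  have lr: "lc (restrict c B) = lc c" unfolding lc_def using c by (intro S.finsum_cong') (auto simp: Pi_iff bT intro!: S.m_closed)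
  have lcc: "lc c \<in> carrier T" using lc_closed[OF c] .
  have "\<exists>!d. d \<in> B \<rightarrow>\<^sub>E carrier R \<and> lc c = lc d" using uniq[OF lcc] unfolding lc_def .
  moreover have "restrict c B \<in> B \<rightarrow>\<^sub>E carrier R \<and> lc c = lc (restrict c B)" using c lr by auto
  moreover have "crd (lc c) \<in> B \<rightarrow>\<^sub>E carrier R \<and> lc c = lc (crd (lc c))" using crd[OF lcc] by auto
  ultimately have "crd (lc c) = restrict c B" by blast
  then show ?thesis using b by simp
qed

lemma lc_add: assumes "c \<in> B \<rightarrow> carrier R" "d \<in> B \<rightarrow> carrier R"
  shows "lc (\<lambda>b. c b \<oplus> d b) = lc c \<oplus>\<^bsub>T\<^esub> lc d"
proof -
  have "lc (\<lambda>b. c b \<oplus> d b) = (\<Oplus>\<^bsub>T\<^esub> b\<in>B. \<phi> (c b) \<otimes>\<^bsub>T\<^esub> b \<oplus>\<^bsub>T\<^esub> \<phi> (d b) \<otimes>\<^bsub>T\<^esub> b)"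
    unfolding lc_def using assms bT by (intro S.finsum_cong') (auto simp: Pi_iff S.l_distr)
  also have "\<dots> = lc c \<oplus>\<^bsub>T\<^esub> lc d" unfolding lc_def using assms bT
    by (intro S.finsum_addf) (auto simp: Pi_iff)
  finally show ?thesis .
qed

lemma lc_smult: assumes "c \<in> B \<rightarrow> carrier R" "r \<in> carrier R"
  shows "lc (\<lambda>b. r \<otimes> c b) = \<phi> r \<otimes>\<^bsub>T\<^esub> lc c"
proof -
  have "lc (\<lambda>b. r \<otimes> c b) = (\<Oplus>\<^bsub>T\<^esub> b\<in>B. \<phi> r \<otimes>\<^bsub>T\<^esub> (\<phi> (c b) \<otimes>\<^bsub>T\<^esub> b))"
    unfolding lc_def using assms bT by (intro S.finsum_cong') (auto simp: Pi_iff S.m_assoc)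
  also have "\<dots> = \<phi> r \<otimes>\<^bsub>T\<^esub> lc c" unfolding lc_def using assms bT finB
    by (intro S.finsum_rdistr[symmetric]) (auto simp: Pi_iff)
  finally show ?thesis .
qed

lemma crd_add: assumes "x \<in> carrier T" "y \<in> carrier T" "b \<in> B"
  shows "crd (x \<oplus>\<^bsub>T\<^esub> y) b = crd x b \<oplus> crd y b"
proof -
  have "x \<oplus>\<^bsub>T\<^esub> y = lc (\<lambda>b. crd x b \<oplus> crd y b)"
    using crd[OF assms(1)] crd[OF assms(2)] lc_add[of "crd x" "crd y"] by (auto simp: PiE_iff Pi_iff)
  then show ?thesis using crd_lc[of "\<lambda>b. crd x b \<oplus> crd y b" b] assms crd_c by auto
qed

lemma crd_smult: assumes "r \<in> carrier R" "x \<in> carrier T" "b \<in> B"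
  shows "crd (\<phi> r \<otimes>\<^bsub>T\<^esub> x) b = r \<otimes> crd x b"
proof -
  have "\<phi> r \<otimes>\<^bsub>T\<^esub> x = lc (\<lambda>b. r \<otimes> crd x b)"
    using crd[OF assms(2)] lc_smult[of "crd x" r] assms(1) by (auto simp: PiE_iff Pi_iff)
  then show ?thesis using crd_lc[of "\<lambda>b. r \<otimes> crd x b" b] assms crd_c by auto
qed

lemma crd_zero: assumes "b \<in> B" shows "crd \<zero>\<^bsub>T\<^esub> b = \<zero>"
proof -
  have "crd (\<phi> \<zero> \<otimes>\<^bsub>T\<^esub> \<zero>\<^bsub>T\<^esub>) b = \<zero> \<otimes> crd \<zero>\<^bsub>T\<^esub> b" using crd_smult[of \<zero> "\<zero>\<^bsub>T\<^esub>" b] assms by simp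
  then show ?thesis using crd_c[of "\<zero>\<^bsub>T\<^esub>" b] assms by simp
qed

lemma crd_neg: assumes "x \<in> carrier T" "b \<in> B" shows "crd (\<ominus>\<^bsub>T\<^esub> x) b = \<ominus> crd x b"
proof -
  have "crd (\<ominus>\<^bsub>T\<^esub> x \<oplus>\<^bsub>T\<^esub> x) b = \<zero>" using crd_zero assms by (simp add: S.l_neg)
  then have "crd (\<ominus>\<^bsub>T\<^esub> x) b \<oplus> crd x b = \<zero>" using crd_add[of "\<ominus>\<^bsub>T\<^esub> x" x b] assms by simp
  then show ?thesis using R.minus_equality[of "crd (\<ominus>\<^bsub>T\<^esub> x) b" "crd x b"] crd_c assms by auto
qed

lemma crd_finsum: assumes "finite A" "f \<in> A \<rightarrow> carrier T" "b \<in> B"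
  shows "crd (\<Oplus>\<^bsub>T\<^esub> a\<in>A. f a) b = (\<Oplus> a\<in>A. crd (f a) b)"
  using assms
proof (induction A rule: finite_induct)
  case empty then show ?case using crd_zero by simp
next
  case (insert a A)
  have fA: "f \<in> A \<rightarrow> carrier T" and fa: "f a \<in> carrier T" using insert by auto
  have "crd (\<Oplus>\<^bsub>T\<^esub> a\<in>insert a A. f a) b = crd (f a \<oplus>\<^bsub>T\<^esub> (\<Oplus>\<^bsub>T\<^esub> a\<in>A. f a)) b"
    using insert fA fa by (simp add: S.finsum_insert)
  also have "\<dots> = crd (f a) b \<oplus> crd (\<Oplus>\<^bsub>T\<^esub> a\<in>A. f a) b"
    using crd_add fa S.finsum_closed[OF fA] insert by simp
  also have "\<dots> = crd (f a) b \<oplus> (\<Oplus> a\<in>A. crd (f a) b)" using insert fA by simp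
  also have "\<dots> = (\<Oplus> a\<in>insert a A. crd (f a) b)"
    using insert fA fa crd_c by (intro R.finsum_insert[symmetric]) (auto simp: Pi_iff)
  finally show ?case .
qed

lemma crd_lc_mult: assumes x: "x \<in> B \<rightarrow> carrier R" and z: "z \<in> carrier T" and b: "b \<in> B"
  shows "crd (lc x \<otimes>\<^bsub>T\<^esub> z) b = (\<Oplus> i\<in>B. x i \<otimes> crd (i \<otimes>\<^bsub>T\<^esub> z) b)"
proof -
  have "lc x \<otimes>\<^bsub>T\<^esub> z = (\<Oplus>\<^bsub>T\<^esub> i\<in>B. (\<phi> (x i) \<otimes>\<^bsub>T\<^esub> i) \<otimes>\<^bsub>T\<^esub> z)"
    unfolding lc_def using x z bT finB by (intro S.finsum_ldistr) (auto simp: Pi_iff intro!: S.m_closed)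
  also have "\<dots> = (\<Oplus>\<^bsub>T\<^esub> i\<in>B. \<phi> (x i) \<otimes>\<^bsub>T\<^esub> (i \<otimes>\<^bsub>T\<^esub> z))"
    using x z bT by (intro S.finsum_cong') (auto simp: Pi_iff S.m_assoc intro!: S.m_closed)
  finally have "crd (lc x \<otimes>\<^bsub>T\<^esub> z) b = (\<Oplus> i\<in>B. crd (\<phi> (x i) \<otimes>\<^bsub>T\<^esub> (i \<otimes>\<^bsub>T\<^esub> z)) b)"
    using crd_finsum[OF finB _ b, of "\<lambda>i. \<phi> (x i) \<otimes>\<^bsub>T\<^esub> (i \<otimes>\<^bsub>T\<^esub> z)"] x z bT
    by (auto simp: Pi_iff intro!: S.m_closed)
  also have "\<dots> = (\<Oplus> i\<in>B. x i \<otimes> crd (i \<otimes>\<^bsub>T\<^esub> z) b)"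
    using x z bT b by (intro R.finsum_cong') (auto simp: Pi_iff crd_smult crd_c intro!: m_closed)
  finally show ?thesis .
qed

lemma crd_mult_expand: assumes t: "t \<in> carrier T" and z: "z \<in> carrier T" and b: "b \<in> B"
  shows "crd (t \<otimes>\<^bsub>T\<^esub> z) b = (\<Oplus> j\<in>B. crd z j \<otimes> crd (t \<otimes>\<^bsub>T\<^esub> j) b)"
proof -
  have cz: "crd z \<in> B \<rightarrow> carrier R" using crd(1)[OF z] by auto
  have "t \<otimes>\<^bsub>T\<^esub> z = lc (crd z) \<otimes>\<^bsub>T\<^esub> t" using crd(2)[OF z] t z S.m_comm by metis
  then have "crd (t \<otimes>\<^bsub>T\<^esub> z) b = (\<Oplus> j\<in>B. crd z j \<otimes> crd (j \<otimes>\<^bsub>T\<^esub> t) b)"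
    using crd_lc_mult[OF cz t b] by simp
  also have "\<dots> = (\<Oplus> j\<in>B. crd z j \<otimes> crd (t \<otimes>\<^bsub>T\<^esub> j) b)"
    using t z b bT cz by (intro R.finsum_cong') (auto simp: S.m_comm Pi_iff crd_c intro!: m_closed)
  finally show ?thesis .
qed

end



lemma (in ring) ideal_finsum:
  assumes I: "ideal I R" and "finite A" and "f \<in> A \<rightarrow> I"
  shows "finsum R f A \<in> I"
  using assms(2,3)
proof (induction A rule: finite_induct)
  case empty then show ?case using additive_subgroup.zero_closed[OF ideal.axioms(1)[OF I]] by simp
next
  case (insert a A)
  have fc: "f \<in> A \<rightarrow> carrier R" "f a \<in> carrier R" using insert ideal.Icarr[OF I] by auto
  then have "finsum R f (insert a A) = f a \<oplus> finsum R f A" using insert by simp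
  then show ?case using insert additive_subgroup.a_closed[OF ideal.axioms(1)[OF I]] by auto
qed

context frame begin

lemma mT_iff:
  assumes mI: "ideal m R" and t: "t \<in> carrier T"
  shows "t \<in> Idl\<^bsub>T\<^esub> (\<phi> ` m) \<longleftrightarrow> (\<forall>b\<in>B. crd t b \<in> m)"
proof -
  have mc: "m \<subseteq> carrier R" using ideal.Icarr[OF mI] by blast
  have pmc: "\<phi> ` m \<subseteq> carrier T" using mc by auto
  have Iid: "ideal (Idl\<^bsub>T\<^esub> (\<phi> ` m)) T" using S.genideal_ideal[OF pmc] .
  show ?thesis
  proof
    assume H: "\<forall>b\<in>B. crd t b \<in> m"
    have "lc (crd t) \<in> Idl\<^bsub>T\<^esub> (\<phi> ` m)" unfolding lc_def
    proof (rule S.ideal_finsum[OF Iid finB])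
      show "(\<lambda>b. \<phi> (crd t b) \<otimes>\<^bsub>T\<^esub> b) \<in> B \<rightarrow> Idl\<^bsub>T\<^esub> (\<phi> ` m)"
      proof
        fix b assume b: "b \<in> B"
        have "\<phi> (crd t b) \<in> Idl\<^bsub>T\<^esub> (\<phi> ` m)" using H b S.genideal_self[OF pmc] by auto
        then show "\<phi> (crd t b) \<otimes>\<^bsub>T\<^esub> b \<in> Idl\<^bsub>T\<^esub> (\<phi> ` m)" using ideal.I_r_closed[OF Iid] bT b by auto
      qed
    qed
    then show "t \<in> Idl\<^bsub>T\<^esub> (\<phi> ` m)" using crd(2)[OF t] by simp
  next
    define SS where "SS = {t\<in>carrier T. \<forall>b\<in>B. crd t b \<in> m}"
    have msum: "(\<Oplus>i\<in>B. f i) \<in> m" if "f \<in> B \<rightarrow> m" for f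
      using R.ideal_finsum[OF mI finB that] .
    have lmul: "y \<otimes>\<^bsub>T\<^esub> x \<in> SS" if x: "x \<in> SS" and y: "y \<in> carrier T" for x y
    proof -
      have xc: "x \<in> carrier T" using x SS_def by auto
      have "crd (y \<otimes>\<^bsub>T\<^esub> x) b \<in> m" if b: "b \<in> B" for b
      proof -
        have "crd (y \<otimes>\<^bsub>T\<^esub> x) b = crd (x \<otimes>\<^bsub>T\<^esub> y) b" using xc y S.m_comm by simp
        also have "\<dots> = (\<Oplus> j\<in>B. crd y j \<otimes> crd (x \<otimes>\<^bsub>T\<^esub> j) b)" using crd_mult_expand[OF xc y b] .
        also have "\<dots> \<in> m"
        proof (rule msum, rule)
          fix j assume j: "j \<in> B"
          have "crd (x \<otimes>\<^bsub>T\<^esub> j) b = crd (j \<otimes>\<^bsub>T\<^esub> x) b" using xc bT[OF j] S.m_comm by simp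
          also have "\<dots> = (\<Oplus> i\<in>B. crd x i \<otimes> crd (j \<otimes>\<^bsub>T\<^esub> i) b)" using crd_mult_expand[OF bT[OF j] xc b] .
          also have "\<dots> \<in> m"
          proof (rule msum, rule)
            fix i assume i: "i \<in> B"
            have "crd x i \<in> m" using x i SS_def by auto
            then show "crd x i \<otimes> crd (j \<otimes>\<^bsub>T\<^esub> i) b \<in> m"
              using ideal.I_r_closed[OF mI] crd_c bT i j b by auto
          qed
          finally show "crd y j \<otimes> crd (x \<otimes>\<^bsub>T\<^esub> j) b \<in> m"
            using ideal.I_l_closed[OF mI] crd_c y j by auto
        qed
        finally show ?thesis .
      qed
      then show ?thesis using xc y SS_def by auto
    qed
    have "ideal SS T"
      unfolding a_inv_def[symmetric]
    proof (intro subgroup.intro idealI[OF S.ring_axioms])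
      show "SS \<subseteq> carrier (add_monoid T)" using SS_def by auto
      show "\<And>x y. x \<in> SS \<Longrightarrow> y \<in> SS \<Longrightarrow> x \<otimes>\<^bsub>add_monoid T\<^esub> y \<in> SS"
        unfolding SS_def using crd_add additive_subgroup.a_closed[OF ideal.axioms(1)[OF mI]] by auto
      show "\<one>\<^bsub>add_monoid T\<^esub> \<in> SS"
        unfolding SS_def using crd_zero additive_subgroup.zero_closed[OF ideal.axioms(1)[OF mI]] by auto
      show "\<And>x. x \<in> SS \<Longrightarrow> inv\<^bsub>add_monoid T\<^esub> x \<in> SS"
        unfolding SS_def a_inv_def[symmetric] using crd_neg additive_subgroup.a_inv_closed[OF ideal.axioms(1)[OF mI]] by auto
      show "\<And>a x. a \<in> SS \<Longrightarrow> x \<in> carrier T \<Longrightarrow> x \<otimes>\<^bsub>T\<^esub> a \<in> SS" using lmul by auto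
      show "\<And>a x. a \<in> SS \<Longrightarrow> x \<in> carrier T \<Longrightarrow> a \<otimes>\<^bsub>T\<^esub> x \<in> SS" using lmul S.m_comm SS_def by auto
    qed
    moreover have "\<phi> ` m \<subseteq> SS"
    proof
      fix y assume "y \<in> \<phi> ` m"
      then obtain r where r: "r \<in> m" "y = \<phi> r" by auto
      have rc: "r \<in> carrier R" using r mc by auto
      have "crd (\<phi> r) b \<in> m" if b: "b \<in> B" for b
      proof -
        have "crd (\<phi> r \<otimes>\<^bsub>T\<^esub> \<one>\<^bsub>T\<^esub>) b = r \<otimes> crd \<one>\<^bsub>T\<^esub> b" using crd_smult[OF rc _ b] by simp
        then show ?thesis using ideal.I_r_closed[OF mI r(1)] crd_c b rc by auto
      qed
      then show "y \<in> SS" using r rc SS_def by auto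
    qed
    ultimately have "Idl\<^bsub>T\<^esub> (\<phi> ` m) \<subseteq> SS" using S.genideal_minimal by auto
    then show "t \<in> Idl\<^bsub>T\<^esub> (\<phi> ` m) \<Longrightarrow> \<forall>b\<in>B. crd t b \<in> m" using SS_def by auto
  qed
qed

end



context frame begin

lemma quot_carrier: "Y \<in> carrier (T Quot I) \<Longrightarrow> \<exists>x\<in>carrier T. Y = I +>\<^bsub>T\<^esub> x"
  unfolding FactRing_def A_RCOSETS_def'[of T] by auto

lemma quot_carrierI: "x \<in> carrier T \<Longrightarrow> I +>\<^bsub>T\<^esub> x \<in> carrier (T Quot I)"
  unfolding FactRing_def A_RCOSETS_def'[of T] by auto

lemma nondeg:
  assumes mI: "ideal m R" and gor: "gorenstein_artinian (T Quot (Idl\<^bsub>T\<^esub> (\<phi> ` m)))"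
  shows "\<exists>b0\<in>B. \<forall>t\<in>carrier T. t \<notin> Idl\<^bsub>T\<^esub> (\<phi> ` m) \<longrightarrow> (\<exists>u\<in>carrier T. crd (u \<otimes>\<^bsub>T\<^esub> t) b0 \<notin> m)"
proof -
  define I where "I = Idl\<^bsub>T\<^esub> (\<phi> ` m)"
  have mc: "m \<subseteq> carrier R" using ideal.Icarr[OF mI] by blast
  have pmc: "\<phi> ` m \<subseteq> carrier T" using mc by auto
  have Iid: "ideal I T" using S.genideal_ideal[OF pmc] unfolding I_def .
  define A where "A = T Quot I"
  have Acr: "cring A" unfolding A_def using ideal.quotient_is_cring[OF Iid S.is_cring] .
  have hom: "(+>\<^bsub>T\<^esub>) I \<in> ring_hom T A" unfolding A_def using ideal.rcos_ring_hom[OF Iid] .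
  have zA: "\<zero>\<^bsub>A\<^esub> = I" unfolding A_def FactRing_def by simp
  obtain n s where art: "artinian_ring A" and loc: "local_ring A n" and s: "s \<in> socle A n" "s \<noteq> \<zero>\<^bsub>A\<^esub>"
    and soc: "socle A n = {a \<otimes>\<^bsub>A\<^esub> s | a. a \<in> carrier A}"
    using gor unfolding gorenstein_artinian_def A_def I_def by blast
  have "s \<in> carrier A" using s unfolding socle_def by auto
  then obtain s0 where s0: "s0 \<in> carrier T" "s = I +>\<^bsub>T\<^esub> s0" using quot_carrier unfolding A_def by blast
  have "s0 \<notin> I" using s(2) s0 S.a_rcos_zero[OF Iid] zA by auto
  then obtain b0 where b0: "b0 \<in> B" "crd s0 b0 \<notin> m" using mT_iff[OF mI s0(1)] unfolding I_def by blast
  show ?thesis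
  proof (intro bexI[OF _ b0(1)] ballI impI)
    fix t assume t: "t \<in> carrier T" and tI: "t \<notin> Idl\<^bsub>T\<^esub> (\<phi> ` m)"
    have ta: "I +>\<^bsub>T\<^esub> t \<in> carrier A" using quot_carrierI[OF t] unfolding A_def .
    have "I +>\<^bsub>T\<^esub> t \<noteq> \<zero>\<^bsub>A\<^esub>" using ideal.rcos_const_imp_mem[OF Iid t] tI zA unfolding I_def by auto
    then obtain u' where u': "u' \<in> carrier A" "s = u' \<otimes>\<^bsub>A\<^esub> (I +>\<^bsub>T\<^esub> t)"
      using cring.gorenstein_gen[OF Acr art loc s soc ta] by blast
    obtain u where u: "u \<in> carrier T" "u' = I +>\<^bsub>T\<^esub> u" using quot_carrier u'(1) unfolding A_def by blast
    have "I +>\<^bsub>T\<^esub> s0 = I +>\<^bsub>T\<^esub> (u \<otimes>\<^bsub>T\<^esub> t)" using u'(2) s0(2) u ring_hom_mult[OF hom u(1) t] by simp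
    then have "s0 \<ominus>\<^bsub>T\<^esub> u \<otimes>\<^bsub>T\<^esub> t \<in> I" using S.quotient_eq_iff_same_a_r_cos[OF Iid s0(1)] u t by simp
    then have "crd (s0 \<ominus>\<^bsub>T\<^esub> u \<otimes>\<^bsub>T\<^esub> t) b0 \<in> m" using mT_iff[OF mI] s0 u t b0 unfolding I_def by simp
    then have diff: "crd s0 b0 \<ominus> crd (u \<otimes>\<^bsub>T\<^esub> t) b0 \<in> m"
      using crd_add crd_neg s0 u t b0 by (simp add: a_minus_def)
    show "\<exists>u\<in>carrier T. crd (u \<otimes>\<^bsub>T\<^esub> t) b0 \<notin> m"
    proof (intro bexI[OF _ u(1)] notI)
      assume h: "crd (u \<otimes>\<^bsub>T\<^esub> t) b0 \<in> m"
      have c1: "crd s0 b0 \<in> carrier R" "crd (u \<otimes>\<^bsub>T\<^esub> t) b0 \<in> carrier R" using crd_c s0 u t b0 by auto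
      have "(crd s0 b0 \<ominus> crd (u \<otimes>\<^bsub>T\<^esub> t) b0) \<oplus> crd (u \<otimes>\<^bsub>T\<^esub> t) b0 = crd s0 b0"
        using c1 by algebra
      moreover have "(crd s0 b0 \<ominus> crd (u \<otimes>\<^bsub>T\<^esub> t) b0) \<oplus> crd (u \<otimes>\<^bsub>T\<^esub> t) b0 \<in> m"
        using diff h additive_subgroup.a_closed[OF ideal.axioms(1)[OF mI]] by blast
      ultimately show False using b0 by simp
    qed
  qed
qed

end



context frame begin

lemma fsum_map:
  assumes fc: "\<And>x. x \<in> carrier T \<Longrightarrow> f x \<in> carrier R"
    and fadd: "\<And>x y. x \<in> carrier T \<Longrightarrow> y \<in> carrier T \<Longrightarrow> f (x \<oplus>\<^bsub>T\<^esub> y) = f x \<oplus> f y"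
    and f0: "f \<zero>\<^bsub>T\<^esub> = \<zero>"
    and A: "finite A" and g: "g \<in> A \<rightarrow> carrier T"
  shows "f (finsum T g A) = (\<Oplus>a\<in>A. f (g a))"
  using A g
proof (induction A rule: finite_induct)
  case empty then show ?case using f0 by simp
next
  case (insert a A)
  have gA: "g \<in> A \<rightarrow> carrier T" and ga: "g a \<in> carrier T" using insert by auto
  have "f (finsum T g (insert a A)) = f (g a \<oplus>\<^bsub>T\<^esub> finsum T g A)" using insert gA ga by simp
  also have "\<dots> = f (g a) \<oplus> (\<Oplus>a\<in>A. f (g a))" using fadd ga S.finsum_closed[OF gA] insert by simp
  also have "\<dots> = (\<Oplus>a\<in>insert a A. f (g a))"
    using insert gA ga fc by (intro R.finsum_insert[symmetric]) (auto simp: Pi_iff)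
  finally show ?case .
qed

lemma main:
  assumes loc: "local_ring R m" and gor: "gorenstein_artinian (T Quot (Idl\<^bsub>T\<^esub> (\<phi> ` m)))"
    and J: "ideal J T"
  shows "splits R (T Quot J) (\<lambda>r. J +>\<^bsub>T\<^esub> \<phi> r) \<longleftrightarrow> \<not> (annihilator T J \<subseteq> Idl\<^bsub>T\<^esub> (\<phi> ` m))"
proof -
  have mI: "ideal m R" and m1: "\<one> \<notin> m" using R.max_one_notin[OF loc] by auto
  have U: "\<And>x. x \<in> carrier R \<Longrightarrow> x \<notin> m \<Longrightarrow> x \<in> Units R" using R.local_ring_unit[OF loc] by blast
  have mc: "m \<subseteq> carrier R" using ideal.Icarr[OF mI] by blast
  have homJ: "(+>\<^bsub>T\<^esub>) J \<in> ring_hom T (T Quot J)" using ideal.rcos_ring_hom[OF J] .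
  have zJ: "\<zero>\<^bsub>T Quot J\<^esub> = J" unfolding FactRing_def by simp
  have oJ: "\<one>\<^bsub>T Quot J\<^esub> = J +>\<^bsub>T\<^esub> \<one>\<^bsub>T\<^esub>" unfolding FactRing_def by simp
  have Jc: "J \<subseteq> carrier T" using ideal.Icarr[OF J] by blast
  show ?thesis
  proof
    assume "splits R (T Quot J) (\<lambda>r. J +>\<^bsub>T\<^esub> \<phi> r)"
    then obtain \<rho> where \<rho>c: "\<rho> \<in> carrier (T Quot J) \<rightarrow> carrier R"
      and \<rho>add: "\<forall>x\<in>carrier (T Quot J). \<forall>y\<in>carrier (T Quot J). \<rho> (x \<oplus>\<^bsub>T Quot J\<^esub> y) = \<rho> x \<oplus> \<rho> y"
      and \<rho>lin: "\<forall>r\<in>carrier R. \<forall>x\<in>carrier (T Quot J). \<rho> ((J +>\<^bsub>T\<^esub> \<phi> r) \<otimes>\<^bsub>T Quot J\<^esub> x) = r \<otimes> \<rho> x"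
      and \<rho>1: "\<rho> \<one>\<^bsub>T Quot J\<^esub> = \<one>"
      unfolding splits_def by blast
    define \<rho>' where "\<rho>' x = \<rho> (J +>\<^bsub>T\<^esub> x)" for x
    have r'c: "\<rho>' x \<in> carrier R" if "x \<in> carrier T" for x
      unfolding \<rho>'_def using \<rho>c quot_carrierI[OF that] by auto
    have r'add: "\<rho>' (x \<oplus>\<^bsub>T\<^esub> y) = \<rho>' x \<oplus> \<rho>' y" if "x \<in> carrier T" "y \<in> carrier T" for x y
      unfolding \<rho>'_def using \<rho>add quot_carrierI that ring_hom_add[OF homJ that] by auto
    have r'lin: "\<rho>' (\<phi> r \<otimes>\<^bsub>T\<^esub> x) = r \<otimes> \<rho>' x" if "r \<in> carrier R" "x \<in> carrier T" for r x
      unfolding \<rho>'_def using \<rho>lin quot_carrierI that ring_hom_mult[OF homJ, of "\<phi> r" x] by auto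
    have r'0: "\<rho>' \<zero>\<^bsub>T\<^esub> = \<zero>"
    proof -
      have "\<rho>' \<zero>\<^bsub>T\<^esub> = \<rho>' \<zero>\<^bsub>T\<^esub> \<oplus> \<rho>' \<zero>\<^bsub>T\<^esub>" using r'add[of "\<zero>\<^bsub>T\<^esub>" "\<zero>\<^bsub>T\<^esub>"] by simp
      then show ?thesis using r'c[of "\<zero>\<^bsub>T\<^esub>"] by (metis R.add.r_cancel_one' S.zero_closed)
    qed
    have r'J: "\<rho>' q = \<zero>" if "q \<in> J" for q
    proof -
      have "J +>\<^bsub>T\<^esub> q = J +>\<^bsub>T\<^esub> \<zero>\<^bsub>T\<^esub>" using S.a_rcos_zero[OF J that] S.a_rcos_zero[OF J] J
        by (simp add: additive_subgroup.zero_closed ideal.axioms(1))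
      then show ?thesis using r'0 unfolding \<rho>'_def by simp
    qed
    have r'1: "\<rho>' \<one>\<^bsub>T\<^esub> = \<one>" unfolding \<rho>'_def using \<rho>1 oJ by simp
    obtain b0 where b0: "b0 \<in> B"
      and nd: "\<And>t. t\<in>carrier T \<Longrightarrow> t \<notin> Idl\<^bsub>T\<^esub> (\<phi> ` m) \<Longrightarrow> \<exists>u\<in>carrier T. crd (u \<otimes>\<^bsub>T\<^esub> t) b0 \<notin> m"
      using nondeg[OF mI gor] by blast
    define G where "G i j = crd (i \<otimes>\<^bsub>T\<^esub> j) b0" for i j
    have Gc: "\<And>i j. i\<in>B \<Longrightarrow> j\<in>B \<Longrightarrow> G i j \<in> carrier R" unfolding G_def using crd_c bT b0 by auto
    have lcG: "crd (lc x \<otimes>\<^bsub>T\<^esub> j) b0 = (\<Oplus>i\<in>B. x i \<otimes> G i j)" if "x \<in> B \<rightarrow> carrier R" "j \<in> B" for x j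
      unfolding G_def using crd_lc_mult[OF that(1) bT[OF that(2)] b0] .
    have NG: "\<forall>i\<in>B. x i \<in> m" if x: "x \<in> B \<rightarrow> carrier R" and hx: "\<And>j. j\<in>B \<Longrightarrow> (\<Oplus>i\<in>B. x i \<otimes> G i j) \<in> m" for x
    proof -
      have tc: "lc x \<in> carrier T" using lc_closed[OF x] .
      have "lc x \<in> Idl\<^bsub>T\<^esub> (\<phi> ` m)"
      proof (rule ccontr)
        assume "lc x \<notin> Idl\<^bsub>T\<^esub> (\<phi> ` m)"
        then obtain u where u: "u \<in> carrier T" "crd (u \<otimes>\<^bsub>T\<^esub> lc x) b0 \<notin> m" using nd[OF tc] by blast
        have "crd (u \<otimes>\<^bsub>T\<^esub> lc x) b0 = crd (lc x \<otimes>\<^bsub>T\<^esub> u) b0" using u tc S.m_comm by simp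
        also have "\<dots> = (\<Oplus>j\<in>B. crd u j \<otimes> crd (lc x \<otimes>\<^bsub>T\<^esub> j) b0)" using crd_mult_expand[OF tc u(1) b0] .
        also have "\<dots> \<in> m"
        proof (rule R.ideal_finsum[OF mI finB], rule)
          fix j assume j: "j \<in> B"
          have "crd (lc x \<otimes>\<^bsub>T\<^esub> j) b0 \<in> m" using lcG[OF x j] hx[OF j] by simp
          then show "crd u j \<otimes> crd (lc x \<otimes>\<^bsub>T\<^esub> j) b0 \<in> m" using ideal.I_l_closed[OF mI] crd_c u j by auto
        qed
        finally show False using u by simp
      qed
      then have "\<forall>i\<in>B. crd (lc x) i \<in> m" using mT_iff[OF mI tc] by simp
      then show ?thesis using crd_lc[OF x] by simp
    qed
    have MS: "(\<forall>y \<in> B \<rightarrow> carrier R. \<exists>x \<in> B \<rightarrow> carrier R. \<forall>j\<in>B. (\<Oplus>i\<in>B. x i \<otimes> G i j) = y j) \<and>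
      (\<forall>x \<in> B \<rightarrow> carrier R. (\<forall>j\<in>B. (\<Oplus>i\<in>B. x i \<otimes> G i j) = \<zero>) \<longrightarrow> (\<forall>i\<in>B. x i = \<zero>))"
      using R.mat_solve[where I=B and J=B and G=G, OF mI m1 U finB finB refl Gc NG] by blast
    have yc: "(\<lambda>j. \<rho>' j) \<in> B \<rightarrow> carrier R" using r'c bT by auto
    then obtain x where x: "x \<in> B \<rightarrow> carrier R" and hx: "\<And>j. j\<in>B \<Longrightarrow> (\<Oplus>i\<in>B. x i \<otimes> G i j) = \<rho>' j"
      using MS by blast
    define t where "t = lc x"
    have tc: "t \<in> carrier T" unfolding t_def using lc_closed[OF x] .
    have tj: "crd (t \<otimes>\<^bsub>T\<^esub> j) b0 = \<rho>' j" if "j \<in> B" for j unfolding t_def using lcG[OF x that] hx[OF that] by simp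
    have tz: "crd (t \<otimes>\<^bsub>T\<^esub> z) b0 = \<rho>' z" if z: "z \<in> carrier T" for z
    proof -
      have cz: "crd z \<in> B \<rightarrow> carrier R" using crd(1)[OF z] by auto
      have "crd (t \<otimes>\<^bsub>T\<^esub> z) b0 = (\<Oplus>j\<in>B. crd z j \<otimes> crd (t \<otimes>\<^bsub>T\<^esub> j) b0)" using crd_mult_expand[OF tc z b0] .
      also have "\<dots> = (\<Oplus>j\<in>B. \<rho>' (\<phi> (crd z j) \<otimes>\<^bsub>T\<^esub> j))"
        using tj cz bT r'lin by (intro R.finsum_cong') (auto simp: Pi_iff r'c)
      also have "\<dots> = \<rho>' (lc (crd z))" unfolding lc_def
        using cz bT by (intro fsum_map[symmetric, OF r'c r'add r'0 finB]) (auto simp: Pi_iff)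
      also have "\<dots> = \<rho>' z" using crd(2)[OF z] by simp
      finally show ?thesis .
    qed
    have ann: "t \<in> annihilator T J"
      unfolding annihilator_def
    proof (safe)
      show "t \<in> carrier T" by fact
      fix q assume q: "q \<in> J"
      have qc: "q \<in> carrier T" using q Jc by auto
      define w where "w = t \<otimes>\<^bsub>T\<^esub> q"
      have wc: "w \<in> carrier T" unfolding w_def using tc qc by simp
      have cw: "crd w \<in> B \<rightarrow> carrier R" using crd(1)[OF wc] by auto
      have "(\<Oplus>i\<in>B. crd w i \<otimes> G i j) = \<zero>" if j: "j \<in> B" for j
      proof -
        have "(\<Oplus>i\<in>B. crd w i \<otimes> G i j) = crd (lc (crd w) \<otimes>\<^bsub>T\<^esub> j) b0" using lcG[OF cw j] by simp
        also have "\<dots> = crd (t \<otimes>\<^bsub>T\<^esub> (q \<otimes>\<^bsub>T\<^esub> j)) b0"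
          using crd(2)[OF wc] tc qc bT[OF j] unfolding w_def by (simp add: S.m_assoc)
        also have "\<dots> = \<rho>' (q \<otimes>\<^bsub>T\<^esub> j)" using tz qc bT[OF j] by simp
        also have "\<dots> = \<zero>" using r'J ideal.I_r_closed[OF J q bT[OF j]] by simp
        finally show ?thesis .
      qed
      then have z: "\<forall>i\<in>B. crd w i = \<zero>" using MS cw by blast
      have "w = lc (crd w)" using crd(2)[OF wc] .
      also have "\<dots> = (\<Oplus>\<^bsub>T\<^esub> b\<in>B. \<zero>\<^bsub>T\<^esub>)" unfolding lc_def using z bT by (intro S.finsum_cong') auto
      also have "\<dots> = \<zero>\<^bsub>T\<^esub>" by simp
      finally show "t \<otimes>\<^bsub>T\<^esub> q = \<zero>\<^bsub>T\<^esub>" unfolding w_def .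
    qed
    have "t \<notin> Idl\<^bsub>T\<^esub> (\<phi> ` m)"
    proof
      assume "t \<in> Idl\<^bsub>T\<^esub> (\<phi> ` m)"
      then have "crd t b0 \<in> m" using mT_iff[OF mI tc] b0 by blast
      moreover have "crd t b0 = \<one>" using tz[of "\<one>\<^bsub>T\<^esub>"] r'1 tc by simp
      ultimately show False using m1 by simp
    qed
    then show "\<not> annihilator T J \<subseteq> Idl\<^bsub>T\<^esub> (\<phi> ` m)" using ann by blast
  next
    assume "\<not> annihilator T J \<subseteq> Idl\<^bsub>T\<^esub> (\<phi> ` m)"
    then obtain t where t: "t \<in> carrier T" "\<And>q. q \<in> J \<Longrightarrow> t \<otimes>\<^bsub>T\<^esub> q = \<zero>\<^bsub>T\<^esub>" and tm: "t \<notin> Idl\<^bsub>T\<^esub> (\<phi> ` m)"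
      unfolding annihilator_def by blast
    obtain b where b: "b \<in> B" "crd t b \<notin> m" using mT_iff[OF mI t(1)] tm by blast
    define a where "a = crd t b"
    have au: "a \<in> Units R" using U crd_c t(1) b unfolding a_def by auto
    define ai where "ai = inv a"
    have aic: "ai \<in> carrier R" and aia: "ai \<otimes> a = \<one>" using au unfolding ai_def by auto
    define \<rho> where "\<rho> Y = ai \<otimes> crd (t \<otimes>\<^bsub>T\<^esub> (SOME x. x \<in> carrier T \<and> Y = J +>\<^bsub>T\<^esub> x)) b" for Y
    have \<rho>eq: "\<rho> (J +>\<^bsub>T\<^esub> x) = ai \<otimes> crd (t \<otimes>\<^bsub>T\<^esub> x) b" if x: "x \<in> carrier T" for x
    proof -
      define x' where "x' = (SOME x'. x' \<in> carrier T \<and> J +>\<^bsub>T\<^esub> x = J +>\<^bsub>T\<^esub> x')"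
      have "x' \<in> carrier T \<and> J +>\<^bsub>T\<^esub> x = J +>\<^bsub>T\<^esub> x'" unfolding x'_def by (rule someI[of _ x]) (simp add: x)
      then have x': "x' \<in> carrier T" "J +>\<^bsub>T\<^esub> x = J +>\<^bsub>T\<^esub> x'" by auto
      have d: "x \<ominus>\<^bsub>T\<^esub> x' \<in> J" using S.quotient_eq_iff_same_a_r_cos[OF J x x'(1)] x'(2) by simp
      have xx: "x' \<oplus>\<^bsub>T\<^esub> (x \<ominus>\<^bsub>T\<^esub> x') = x"
        unfolding a_minus_def using x x'(1) S.add.m_lcomm[of x' x "\<ominus>\<^bsub>T\<^esub> x'"] S.r_neg[of x'] by simp
      have "t \<otimes>\<^bsub>T\<^esub> x = t \<otimes>\<^bsub>T\<^esub> x' \<oplus>\<^bsub>T\<^esub> t \<otimes>\<^bsub>T\<^esub> (x \<ominus>\<^bsub>T\<^esub> x')"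
        using t(1) x x'(1) S.r_distr[of x' "x \<ominus>\<^bsub>T\<^esub> x'" t] xx by (simp add: S.minus_closed)
      also have "\<dots> = t \<otimes>\<^bsub>T\<^esub> x'" using t(2)[OF d] t(1) x'(1) by simp
      finally show ?thesis unfolding \<rho>_def x'_def[symmetric] by simp
    qed
    show "splits R (T Quot J) (\<lambda>r. J +>\<^bsub>T\<^esub> \<phi> r)"
      unfolding splits_def
    proof (intro exI[of _ \<rho>] conjI ballI)
      show "\<rho> \<in> carrier (T Quot J) \<rightarrow> carrier R"
      proof
        fix Y assume "Y \<in> carrier (T Quot J)"
        then obtain x where "x \<in> carrier T" "Y = J +>\<^bsub>T\<^esub> x" using quot_carrier by blast
        then show "\<rho> Y \<in> carrier R" using \<rho>eq aic crd_c t(1) b by simp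
      qed
    next
      fix Y Z assume "Y \<in> carrier (T Quot J)" "Z \<in> carrier (T Quot J)"
      then obtain x z where xz: "x \<in> carrier T" "Y = J +>\<^bsub>T\<^esub> x" "z \<in> carrier T" "Z = J +>\<^bsub>T\<^esub> z"
        using quot_carrier by metis
      have "Y \<oplus>\<^bsub>T Quot J\<^esub> Z = J +>\<^bsub>T\<^esub> (x \<oplus>\<^bsub>T\<^esub> z)" using ring_hom_add[OF homJ xz(1,3)] xz by simp
      then show "\<rho> (Y \<oplus>\<^bsub>T Quot J\<^esub> Z) = \<rho> Y \<oplus> \<rho> Z"
        using \<rho>eq xz t(1) b crd_add crd_c aic by (simp add: S.r_distr R.r_distr)
    next
      fix r Y assume r: "r \<in> carrier R" and "Y \<in> carrier (T Quot J)"
      then obtain x where x: "x \<in> carrier T" "Y = J +>\<^bsub>T\<^esub> x" using quot_carrier by blast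
      have "(J +>\<^bsub>T\<^esub> \<phi> r) \<otimes>\<^bsub>T Quot J\<^esub> Y = J +>\<^bsub>T\<^esub> (\<phi> r \<otimes>\<^bsub>T\<^esub> x)" using ring_hom_mult[OF homJ, of "\<phi> r" x] x r by simp
      moreover have "t \<otimes>\<^bsub>T\<^esub> (\<phi> r \<otimes>\<^bsub>T\<^esub> x) = \<phi> r \<otimes>\<^bsub>T\<^esub> (t \<otimes>\<^bsub>T\<^esub> x)" using t(1) x r S.m_lcomm by simp
      ultimately show "\<rho> ((J +>\<^bsub>T\<^esub> \<phi> r) \<otimes>\<^bsub>T Quot J\<^esub> Y) = r \<otimes> \<rho> Y"
        using \<rho>eq x r t(1) b crd_smult crd_c aic by (simp add: R.m_lcomm)
    next
      show "\<rho> \<one>\<^bsub>T Quot J\<^esub> = \<one>" using oJ \<rho>eq[of "\<one>\<^bsub>T\<^esub>"] t(1) aia unfolding a_def by simp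
    qed
  qed
qed

end


theorem theorem10:
  fixes R :: "('a, 'm) ring_scheme" and T :: "('b, 'n) ring_scheme"
    and m :: "'a set" and \<eta> :: "'b set" and \<phi> :: "'a \<Rightarrow> 'b" and J :: "'b set"
  assumes "noetherian_ring R" and "local_ring R m"
    and "noetherian_ring T" and "local_ring T \<eta>"
    and "\<phi> \<in> ring_hom R T" and "\<phi> ` m \<subseteq> \<eta>"
    and "finite_free_via R T \<phi>"
    and "gorenstein_artinian (T Quot (Idl\<^bsub>T\<^esub> (\<phi> ` m)))"
    and "ideal J T"
  shows "splits R (T Quot J) (\<lambda>r. J +>\<^bsub>T\<^esub> \<phi> r)
           \<longleftrightarrow> \<not> (annihilator T J \<subseteq> Idl\<^bsub>T\<^esub> (\<phi> ` m))"
proof -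
  obtain B where finB: "finite B" and BT: "B \<subseteq> carrier T"
    and uq: "\<forall>t\<in>carrier T. \<exists>!c. c \<in> B \<rightarrow>\<^sub>E carrier R \<and> t = (\<Oplus>\<^bsub>T\<^esub> b\<in>B. \<phi> (c b) \<otimes>\<^bsub>T\<^esub> b)"
    using assms(7) unfolding finite_free_via_def by blast
  have cR: "cring R" using assms(2) unfolding local_ring_def by blast
  have cT: "cring T" using assms(4) unfolding local_ring_def by blast
  have fr: "frame R T \<phi> B"
    by (rule frame.intro[OF ring_hom_cring.intro[OF cR cT ring_hom_cring_axioms.intro[OF assms(5)]]
          frame_axioms.intro[OF finB BT]]) (use uq in blast)
  show ?thesis using frame.main[OF fr assms(2) assms(8) assms(9)] .
qed

end
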